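(* Let $Q_0,\beta_1,\beta_2,\beta_3,c_1,c_2,c_3,\theta,\pi,\delta,\alpha,\mu$ be positive constants and $u_1\in[0,1]$ a constant. Consider the system \[ \begin{aligned} S' &= Q_0-\beta_m S-\mu S,\\ I_1' &= \beta_m S-(\theta+\mu+\delta)I_1,\\ I_2' &= \theta I_1-(\delta+\mu+\pi)I_2,\\ A' &= \delta I_1+\delta I_2+\pi I_2-(\alpha+\mu)A, \end{aligned} \qquad \beta_m=\frac{(1-u_1)(\beta_1c_1I_1+\beta_2c_2I_2+\beta_3c_3A)}{N},\quad N=S+I_1+I_2+A, \] and define $R_0=\zeta_1+\zeta_2+\zeta_3+\zeta_4$ with \[ \zeta_1=\frac{(1-u_1)\beta_1c_1}{\theta+\delta+\mu},\quad \zeta_2=\frac{(1-u_1)\beta_2c_2\theta}{(\theta+\delta+\mu)(\delta+\mu+\pi)},\quad \zeta_3=\frac{(1-u_1)\beta_3c_3\theta(\delta+\pi)}{(\theta+\delta+\mu)(\delta+\mu+\pi)(\alpha+\mu)},\quad \zeta_4=\frac{(1-u_1)\beta_3c_3\delta}{(\theta+\delta+\mu)(\alpha+\mu)}. \] (i) If $R_0\le 1$, the system admits the single (disease-free) equilibrium $E_0=(Q_0/\mu,0,0,0)$ in the nonnegative orthant. (ii) If $R_0>1$, the system admits two distinct equilibria: $E_0$ and a positive endemic equilibrium $E_1=(S^*,I_1^*,I_2^*,A^* )$ with all components positive.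
   Context: $S$ denotes susceptibles, $I_1$ unaware infectives, $I_2$ aware infectives, $A$ individuals with AIDS; $N$ is the total population; $R_0$ is the basic reproduction number. *)

theory Defs
  imports Complex_Main
begin

definition beta_m :: "real \<Rightarrow> real \<Rightarrow> real \<Rightarrow> real \<Rightarrow> real \<Rightarrow> real \<Rightarrow> real
    \<Rightarrow> real \<Rightarrow> real \<Rightarrow> real \<Rightarrow> real \<Rightarrow> real" where
  "beta_m u1 b1 b2 b3 c1 c2 c3 S I1 I2 A =
     (1 - u1) * (b1 * c1 * I1 + b2 * c2 * I2 + b3 * c3 * A) / (S + I1 + I2 + A)"

definition is_equilibrium :: "real \<Rightarrow> real \<Rightarrow> real \<Rightarrow> real \<Rightarrow> real \<Rightarrow> real \<Rightarrow> real
    \<Rightarrow> real \<Rightarrow> real \<Rightarrow> real \<Rightarrow> real \<Rightarrow> real \<Rightarrow> real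
    \<Rightarrow> real \<times> real \<times> real \<times> real \<Rightarrow> bool" where
  "is_equilibrium Q0 b1 b2 b3 c1 c2 c3 th pp dl al mu u1 E =
     (case E of (S, I1, I2, A) \<Rightarrow>
       (let bm = beta_m u1 b1 b2 b3 c1 c2 c3 S I1 I2 A in
          Q0 - bm * S - mu * S = 0 \<and>
          bm * S - (th + mu + dl) * I1 = 0 \<and>
          th * I1 - (dl + mu + pp) * I2 = 0 \<and>
          dl * I1 + dl * I2 + pp * I2 - (al + mu) * A = 0))"

definition R0 :: "real \<Rightarrow> real \<Rightarrow> real \<Rightarrow> real \<Rightarrow> real \<Rightarrow> real
    \<Rightarrow> real \<Rightarrow> real \<Rightarrow> real \<Rightarrow> real \<Rightarrow> real \<Rightarrow> real \<Rightarrow> real" where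
  "R0 b1 b2 b3 c1 c2 c3 th pp dl al mu u1 =
     (1 - u1) * b1 * c1 / (th + dl + mu)
   + (1 - u1) * b2 * c2 * th / ((th + dl + mu) * (dl + mu + pp))
   + (1 - u1) * b3 * c3 * th * (dl + pp) / ((th + dl + mu) * (dl + mu + pp) * (al + mu))
   + (1 - u1) * b3 * c3 * dl / ((th + dl + mu) * (al + mu))"

definition nonneg4 :: "real \<times> real \<times> real \<times> real \<Rightarrow> bool" where
  "nonneg4 E = (case E of (S, I1, I2, A) \<Rightarrow> 0 \<le> S \<and> 0 \<le> I1 \<and> 0 \<le> I2 \<and> 0 \<le> A)"

definition pos4 :: "real \<times> real \<times> real \<times> real \<Rightarrow> bool" where
  "pos4 E = (case E of (S, I1, I2, A) \<Rightarrow> 0 < S \<and> 0 < I1 \<and> 0 < I2 \<and> 0 < A)"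

end

theory Submission
  imports Defs
begin

theorem theorem3:
  fixes Q0 b1 b2 b3 c1 c2 c3 th pp dl al mu u1 :: real
  assumes "Q0 > 0" "b1 > 0" "b2 > 0" "b3 > 0" "c1 > 0" "c2 > 0" "c3 > 0"
    and "th > 0" "pp > 0" "dl > 0" "al > 0" "mu > 0"
    and "0 \<le> u1" "u1 \<le> 1"
  shows "(R0 b1 b2 b3 c1 c2 c3 th pp dl al mu u1 \<le> 1 \<longrightarrow>
            {E. nonneg4 E \<and> is_equilibrium Q0 b1 b2 b3 c1 c2 c3 th pp dl al mu u1 E}
              = {(Q0 / mu, 0, 0, 0)})
       \<and> (R0 b1 b2 b3 c1 c2 c3 th pp dl al mu u1 > 1 \<longrightarrow>
            (\<exists>E1. pos4 E1 \<and> E1 \<noteq> (Q0 / mu, 0, 0, 0) \<and>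
               {E. nonneg4 E \<and> is_equilibrium Q0 b1 b2 b3 c1 c2 c3 th pp dl al mu u1 E}
                 = {(Q0 / mu, 0, 0, 0), E1}))"
proof -
  note pos = assms
  define k1 where "k1 = th + mu + dl"
  define k2 where "k2 = dl + mu + pp"
  define k3 where "k3 = al + mu"
  define b where "b = th / k2"
  define a where "a = (dl + (dl + pp) * b) / k3"
  define c where "c = 1 + b + a"
  define K where "K = (1 - u1) * (b1 * c1 + b2 * c2 * b + b3 * c3 * a)"
  have k1p: "k1 > 0" and k2p: "k2 > 0" and k3p: "k3 > 0"
    using pos by (auto simp: k1_def k2_def k3_def)
  have bp: "b > 0" using pos k2p by (simp add: b_def)
  have ap: "a > 0" using pos k3p bp unfolding a_def by (simp add: add_pos_pos)
  have cp: "c > 0" using ap bp by (simp add: c_def)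
  have Kge: "K \<ge> 0" using pos ap bp by (simp add: K_def)
  have R0eq: "R0 b1 b2 b3 c1 c2 c3 th pp dl al mu u1 = K / k1"
  proof -
    have e1: "th + dl + mu = k1" "dl + mu + pp = k2" "al + mu = k3"
      by (simp_all add: k1_def k2_def k3_def)
    have "R0 b1 b2 b3 c1 c2 c3 th pp dl al mu u1 =
       (1 - u1) * b1 * c1 / k1 + (1 - u1) * b2 * c2 * th / (k1 * k2)
       + (1 - u1) * b3 * c3 * th * (dl + pp) / (k1 * k2 * k3)
       + (1 - u1) * b3 * c3 * dl / (k1 * k3)"
      unfolding R0_def e1 ..
    also have "\<dots> = K / k1"
      unfolding K_def a_def b_def using k1p k2p k3p
      by (simp add: field_simps)
    finally show ?thesis .
  qed
  define E0 where "E0 = (Q0 / mu, 0::real, 0::real, 0::real)"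
  have E0eq: "is_equilibrium Q0 b1 b2 b3 c1 c2 c3 th pp dl al mu u1 E0"
    using pos by (simp add: E0_def is_equilibrium_def beta_m_def Let_def)
  have E0nn: "nonneg4 E0" using pos by (simp add: E0_def nonneg4_def)
  have struct: "I2 = b * I1 \<and> A = a * I1 \<and> Q0 = k1 * I1 + mu * S \<and>
      (I1 = 0 \<longrightarrow> (S, I1, I2, A) = E0) \<and> (I1 > 0 \<longrightarrow> K * S = k1 * S + k1 * c * I1)"
    if nn: "nonneg4 (S, I1, I2, A)"
      and eq: "is_equilibrium Q0 b1 b2 b3 c1 c2 c3 th pp dl al mu u1 (S, I1, I2, A)"
    for S I1 I2 A
  proof -
    define bm where "bm = beta_m u1 b1 b2 b3 c1 c2 c3 S I1 I2 A"
    have e1: "Q0 - bm * S - mu * S = 0" and e2: "bm * S - (th + mu + dl) * I1 = 0"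
      and e3: "th * I1 - (dl + mu + pp) * I2 = 0"
      and e4: "dl * I1 + dl * I2 + pp * I2 - (al + mu) * A = 0"
      using eq by (simp_all add: is_equilibrium_def bm_def Let_def)
    have I2: "I2 = b * I1" using e3 k2p by (simp add: b_def k2_def field_simps)
    have A: "A = a * I1" using e4 k3p I2 by (simp add: a_def k3_def field_simps)
    have Q: "Q0 = k1 * I1 + mu * S" using e1 e2 by (simp add: k1_def algebra_simps)
    have z: "I1 = 0 \<longrightarrow> (S, I1, I2, A) = E0"
    proof
      assume "I1 = 0"
      then show "(S, I1, I2, A) = E0" using I2 A Q pos by (simp add: E0_def field_simps)
    qed
    have p: "I1 > 0 \<longrightarrow> K * S = k1 * S + k1 * c * I1"
    proof
      assume I1p: "I1 > 0"
      have Np: "S + I1 + I2 + A = S + c * I1" using I2 A by (simp add: c_def algebra_simps)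
      have Spos: "S + c * I1 > 0" using nn cp I1p by (simp add: nonneg4_def add_nonneg_pos)
      have bmv: "bm = K * I1 / (S + c * I1)"
        unfolding bm_def beta_m_def Np K_def using I2 A by (simp add: algebra_simps)
      have "K * I1 * S / (S + c * I1) = k1 * I1" using e2 bmv by (simp add: k1_def)
      then have "K * I1 * S = k1 * I1 * (S + c * I1)" using Spos by (simp add: field_simps)
      then have "I1 * (K * S) = I1 * (k1 * S + k1 * c * I1)" by (simp add: algebra_simps)
      then show "K * S = k1 * S + k1 * c * I1" using I1p by simp
    qed
    show ?thesis using I2 A Q z p by blast
  qed
  show ?thesis
  proof (intro conjI impI)
    assume R: "R0 b1 b2 b3 c1 c2 c3 th pp dl al mu u1 \<le> 1"
    then have Kle: "K \<le> k1" using k1p R0eq by (simp add: divide_le_eq)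
    show "{E. nonneg4 E \<and> is_equilibrium Q0 b1 b2 b3 c1 c2 c3 th pp dl al mu u1 E}
              = {(Q0 / mu, 0, 0, 0)}"
    proof (intro equalityI subsetI)
      fix E :: "real \<times> real \<times> real \<times> real" assume "E \<in> {(Q0 / mu, 0, 0, 0)}"
      then show "E \<in> {E. nonneg4 E \<and> is_equilibrium Q0 b1 b2 b3 c1 c2 c3 th pp dl al mu u1 E}"
        using E0eq E0nn by (simp add: E0_def)
    next
      fix E :: "real \<times> real \<times> real \<times> real" assume EE: "E \<in> {E. nonneg4 E \<and> is_equilibrium Q0 b1 b2 b3 c1 c2 c3 th pp dl al mu u1 E}"
      obtain S I1 I2 A where Ed: "E = (S, I1, I2, A)" by (cases E) auto
      have nn: "nonneg4 (S, I1, I2, A)"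
        and eq: "is_equilibrium Q0 b1 b2 b3 c1 c2 c3 th pp dl al mu u1 (S, I1, I2, A)"
        using EE Ed by auto
      note st = struct[OF nn eq]
      have "I1 \<ge> 0" "S \<ge> 0" using nn by (auto simp: nonneg4_def)
      have "(S, I1, I2, A) = (Q0 / mu, 0, 0, 0)"
      proof (cases "I1 = 0")
        case True
          then have "(S, I1, I2, A) = E0" using st by blast
          then show ?thesis by (simp only: E0_def)
      next
        case False
        then have I1p: "I1 > 0" using \<open>I1 \<ge> 0\<close> by simp
        then have e: "K * S = k1 * S + k1 * c * I1" using st by blast
        have "K * S \<le> k1 * S" using Kle \<open>S \<ge> 0\<close> by (simp add: mult_right_mono)
        moreover have "k1 * c * I1 > 0" using k1p cp I1p by simp
        ultimately show ?thesis using e by linarith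
      qed
      then show "E \<in> {(Q0 / mu, 0, 0, 0)}" using Ed by simp
    qed
  next
    assume R: "R0 b1 b2 b3 c1 c2 c3 th pp dl al mu u1 > 1"
    then have Kgt: "K > k1" using k1p R0eq by (simp add: less_divide_eq)
    define D where "D = K - k1"
    have Dp: "D > 0" using Kgt by (simp add: D_def)
    define I1s where "I1s = Q0 * D / (k1 * (D + mu * c))"
    define Ss where "Ss = c * Q0 / (D + mu * c)"
    define E1 where "E1 = (Ss, I1s, b * I1s, a * I1s)"
    have dmc: "D + mu * c > 0" using Dp pos cp by (simp add: add_pos_pos)
    have I1sp: "I1s > 0" using pos Dp k1p dmc by (simp add: I1s_def)
    have Ssp: "Ss > 0" using pos cp dmc by (simp add: Ss_def)
    have E1pos: "pos4 E1" using I1sp Ssp ap bp by (simp add: pos4_def E1_def)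
    have E1ne: "E1 \<noteq> E0" using I1sp by (simp add: E1_def E0_def)
    have nz1: "D + mu * c \<noteq> 0" "D + c * mu \<noteq> 0" "k1 \<noteq> 0" using dmc k1p by (auto simp: mult.commute)
    define F where "F = Q0 / (D + mu * c)"
    have I1F: "k1 * I1s = D * F" using nz1 by (simp add: I1s_def F_def)
    have SsF: "Ss = c * F" by (simp add: Ss_def F_def)
    have SsI: "Ss * D = k1 * c * I1s" using I1F SsF by (simp add: algebra_simps)
    have "Q0 = (D + mu * c) * F" using nz1 by (simp add: F_def)
    then have QI: "Q0 = k1 * I1s + mu * Ss" using I1F SsF by (simp add: algebra_simps)
    have E1eq: "is_equilibrium Q0 b1 b2 b3 c1 c2 c3 th pp dl al mu u1 E1"
    proof -
      define bm where "bm = beta_m u1 b1 b2 b3 c1 c2 c3 Ss I1s (b * I1s) (a * I1s)"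
      have Np: "Ss + I1s + b * I1s + a * I1s = Ss + c * I1s" by (simp add: c_def algebra_simps)
      have Spos: "Ss + c * I1s > 0" using Ssp cp I1sp by (simp add: add_pos_pos)
      have bmv: "bm = K * I1s / (Ss + c * I1s)"
        unfolding bm_def beta_m_def Np K_def by (simp add: algebra_simps)
      have "K * Ss = k1 * Ss + k1 * c * I1s" using SsI by (simp add: D_def algebra_simps)
      then have "K * I1s * Ss = k1 * I1s * (Ss + c * I1s)" by (simp add: algebra_simps)
      then have X: "K * I1s * Ss = k1 * I1s * (Ss + c * I1s)" .
      have "bm * (Ss + c * I1s) = K * I1s" using bmv Spos by simp
      then have "(bm * Ss) * (Ss + c * I1s) = (k1 * I1s) * (Ss + c * I1s)"
        using X by (metis mult.commute mult.assoc)
      then have h2: "bm * Ss = k1 * I1s" using Spos by simp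
      have h3: "th * I1s - (dl + mu + pp) * (b * I1s) = 0" using k2p
        by (simp add: b_def k2_def field_simps)
      have h4: "dl * I1s + dl * (b * I1s) + pp * (b * I1s) - (al + mu) * (a * I1s) = 0"
        using k3p by (simp add: a_def k3_def field_simps)
      have h1: "Q0 - bm * Ss - mu * Ss = 0" using h2 QI by simp
      have h2': "bm * Ss - (th + mu + dl) * I1s = 0" using h2 by (simp add: k1_def)
      show ?thesis unfolding E1_def is_equilibrium_def Let_def prod.case bm_def [symmetric]
        using h1 h2' h3 h4 by blast
    qed
    have E1nn: "nonneg4 E1" using E1pos by (simp add: pos4_def nonneg4_def E1_def)
    show "\<exists>E1. pos4 E1 \<and> E1 \<noteq> (Q0 / mu, 0, 0, 0) \<and>
               {E. nonneg4 E \<and> is_equilibrium Q0 b1 b2 b3 c1 c2 c3 th pp dl al mu u1 E}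
                 = {(Q0 / mu, 0, 0, 0), E1}"
    proof (intro exI conjI)
      show "pos4 E1" by (rule E1pos)
      show "E1 \<noteq> (Q0 / mu, 0, 0, 0)" using E1ne by (simp add: E0_def)
      show "{E. nonneg4 E \<and> is_equilibrium Q0 b1 b2 b3 c1 c2 c3 th pp dl al mu u1 E}
                 = {(Q0 / mu, 0, 0, 0), E1}"
      proof (intro equalityI subsetI)
        fix E :: "real \<times> real \<times> real \<times> real" assume "E \<in> {(Q0 / mu, 0, 0, 0), E1}"
        then show "E \<in> {E. nonneg4 E \<and> is_equilibrium Q0 b1 b2 b3 c1 c2 c3 th pp dl al mu u1 E}"
          using E0eq E0nn E1eq E1nn by (auto simp: E0_def)
      next
        fix E :: "real \<times> real \<times> real \<times> real" assume EE: "E \<in> {E. nonneg4 E \<and> is_equilibrium Q0 b1 b2 b3 c1 c2 c3 th pp dl al mu u1 E}"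
        obtain S I1 I2 A where Ed: "E = (S, I1, I2, A)" by (cases E) auto
        have nn: "nonneg4 (S, I1, I2, A)"
          and eq: "is_equilibrium Q0 b1 b2 b3 c1 c2 c3 th pp dl al mu u1 (S, I1, I2, A)"
          using EE Ed by auto
        show "E \<in> {(Q0 / mu, 0, 0, 0), E1}"
        proof (cases "(S, I1, I2, A) = E1")
          case True then show ?thesis using Ed by simp
        next
          case ne: False
        note st = struct[OF nn eq]
        have "I1 \<ge> 0" using nn by (auto simp: nonneg4_def)
        have "(S, I1, I2, A) = (Q0 / mu, 0, 0, 0)"
        proof (cases "I1 = 0")
          case True
          then have "(S, I1, I2, A) = E0" using st by blast
          then show ?thesis by (simp only: E0_def)
        next
          case False
          then have I1p: "I1 > 0" using \<open>I1 \<ge> 0\<close> by simp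
          then have e: "S * D = k1 * c * I1" using st by (simp add: D_def algebra_simps)
          have Q: "Q0 = k1 * I1 + mu * S" using st by blast
          have "Q0 * D = I1 * (k1 * (D + mu * c))" using e Q by (simp add: algebra_simps)
          have nzk: "k1 * (D + mu * c) \<noteq> 0" using dmc k1p by simp
          have "I1 = Q0 * D / (k1 * (D + mu * c))"
            using \<open>Q0 * D = I1 * (k1 * (D + mu * c))\<close> nzk
            by (simp add: eq_divide_eq)
          then have "I1 = I1s" by (simp add: I1s_def)
          moreover have "S * D = Ss * D" using e SsI \<open>I1 = I1s\<close> by simp
          then have "S = Ss" using Dp by simp
          ultimately have "(S, I1, I2, A) = E1" using st by (simp add: E1_def)
          with ne show ?thesis by simp
        qed
        then show ?thesis using Ed by simp
        qed
      qed
    qed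
  qed
qed

end
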